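(* Let $X$ be a finite discrete space with at least two elements, $\Gamma$ a nonempty countable set, and $\varphi:\Gamma\to\Gamma$ one-to-one without periodic points. Then $X^\Gamma$ has an uncountable subset $M$ consisting of transitive points of $\sigma_\varphi$, and there exists $r>0$ such that for all distinct $x,y\in M$: $F^*_{xy}(t)=1$ for every $t>0$, and $F_{xy}(r)=0$.
   Context: $X^\Gamma$ has the product topology and a fixed compatible metric $d$; $\sigma_\varphi((x_\alpha)_{\alpha\in\Gamma})=(x_{\varphi(\alpha)})_{\alpha\in\Gamma}$. A point $x$ is a transitive point if $\{\sigma_\varphi^n(x):n\ge0\}$ is dense in $X^\Gamma$. With $f=\sigma_\varphi$, $\xi(x,y,t,n)=\#\{i\in\{0,\dots,n-1\}:d(f^i(x),f^i(y))<t\}$, $F_{xy}(t)=\liminf_n\xi(x,y,t,n)/n$, $F^*_{xy}(t)=\limsup_n\xi(x,y,t,n)/n$. *)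

theory Defs
  imports "HOL-Analysis.Analysis"
begin

definition shift_map :: "'g set \<Rightarrow> ('g \<Rightarrow> 'g) \<Rightarrow> ('g \<Rightarrow> 'x) \<Rightarrow> ('g \<Rightarrow> 'x)" where
  "shift_map G phi x = (\<lambda>\<alpha>\<in>G. x (phi \<alpha>))"

definition xi :: "('a \<Rightarrow> 'a \<Rightarrow> real) \<Rightarrow> ('a \<Rightarrow> 'a) \<Rightarrow> 'a \<Rightarrow> 'a \<Rightarrow> real \<Rightarrow> nat \<Rightarrow> nat" where
  "xi d f x y t n = card {i \<in> {..<n}. d ((f ^^ i) x) ((f ^^ i) y) < t}"

definition F_lower :: "('a \<Rightarrow> 'a \<Rightarrow> real) \<Rightarrow> ('a \<Rightarrow> 'a) \<Rightarrow> 'a \<Rightarrow> 'a \<Rightarrow> real \<Rightarrow> ereal" where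
  "F_lower d f x y t = liminf (\<lambda>n. ereal (real (xi d f x y t n) / real n))"

definition F_upper :: "('a \<Rightarrow> 'a \<Rightarrow> real) \<Rightarrow> ('a \<Rightarrow> 'a) \<Rightarrow> 'a \<Rightarrow> 'a \<Rightarrow> real \<Rightarrow> ereal" where
  "F_upper d f x y t = limsup (\<lambda>n. ereal (real (xi d f x y t n) / real n))"

definition transitive_point :: "'a topology \<Rightarrow> ('a \<Rightarrow> 'a) \<Rightarrow> 'a \<Rightarrow> bool" where
  "transitive_point T f x \<longleftrightarrow> T closure_of {(f ^^ n) x | n. True} = topspace T"

end

theory Submission
  imports Defs
begin


lemma uncountable_nat_bool: "uncountable (UNIV :: (nat \<Rightarrow> bool) set)"
proof
  assume c: "countable (UNIV :: (nat \<Rightarrow> bool) set)"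
  define f where "f = from_nat_into (UNIV :: (nat \<Rightarrow> bool) set)"
  have "\<exists>n. f n = (\<lambda>k. \<not> f k k)" unfolding f_def by (rule from_nat_into_surj[OF c UNIV_I])
  then obtain n where "f n = (\<lambda>k. \<not> f k k)" by blast
  then have "f n n = (\<not> f n n)" by (rule fun_cong)
  then show False by simp
qed

locale L5 =
  fixes X :: "'x set" and G :: "'g set" and phi :: "'g \<Rightarrow> 'g"
    and d :: "('g \<Rightarrow> 'x) \<Rightarrow> ('g \<Rightarrow> 'x) \<Rightarrow> real"
  assumes finX: "finite X" and cardX: "card X \<ge> 2"
    and cntG: "countable G" and neG: "G \<noteq> {}"
    and phiG: "phi ` G \<subseteq> G" and injphi: "inj_on phi G"
    and aper: "\<forall>\<alpha>\<in>G. \<forall>n::nat. n \<ge> 1 \<longrightarrow> (phi ^^ n) \<alpha> \<noteq> \<alpha>"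
    and ms: "Metric_space (PiE G (\<lambda>_. X)) d"
    and top: "Metric_space.mtopology (PiE G (\<lambda>_. X)) d
           = product_topology (\<lambda>_. discrete_topology X) G"
begin

lemma funpow_G: "\<alpha> \<in> G \<Longrightarrow> (phi ^^ n) \<alpha> \<in> G"
  by (induction n) (use phiG in auto)

lemma funpow_inj: "\<alpha> \<in> G \<Longrightarrow> \<beta> \<in> G \<Longrightarrow> (phi ^^ n) \<alpha> = (phi ^^ n) \<beta> \<Longrightarrow> \<alpha> = \<beta>"
proof (induction n)
  case 0 then show ?case by simp
next
  case (Suc n)
  then have "(phi ^^ n) \<alpha> = (phi ^^ n) \<beta>"
    using injphi funpow_G by (auto dest: inj_onD)
  then show ?case using Suc by blast
qed

lemma L0'': "\<beta> \<in> G \<Longrightarrow> \<gamma> \<in> G \<Longrightarrow> m \<le> n \<Longrightarrow> (phi ^^ n) \<beta> = (phi ^^ m) \<gamma> \<Longrightarrow> (phi ^^ (n - m)) \<beta> = \<gamma>"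
proof -
  assume a: "\<beta> \<in> G" "\<gamma> \<in> G" "m \<le> n" "(phi ^^ n) \<beta> = (phi ^^ m) \<gamma>"
  have "(phi ^^ n) \<beta> = (phi ^^ m) ((phi ^^ (n - m)) \<beta>)"
    using a(3) by (metis funpow_add le_add_diff_inverse comp_apply)
  then show ?thesis using a funpow_inj funpow_G by metis
qed

lemma L0: "\<alpha> \<in> G \<Longrightarrow> (phi ^^ a) \<alpha> = (phi ^^ b) \<alpha> \<Longrightarrow> a = b"
proof (rule ccontr)
  assume A: "\<alpha> \<in> G" "(phi ^^ a) \<alpha> = (phi ^^ b) \<alpha>" "a \<noteq> b"
  { fix a b assume "a < b" "(phi ^^ a) \<alpha> = (phi ^^ b) \<alpha>"
    then have "(phi ^^ (b - a)) \<alpha> = \<alpha>" using L0''[of \<alpha> \<alpha> a b] A(1) by auto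
    moreover have "b - a \<ge> 1" using \<open>a < b\<close> by simp
    ultimately have False using aper A(1) by blast }
  then show False using A by (metis linorder_neqE_nat)
qed

lemma G_infinite: "infinite G"
proof -
  obtain \<alpha> where a: "\<alpha> \<in> G" using neG by blast
  have "inj (\<lambda>n. (phi ^^ n) \<alpha>)" using L0 a by (auto intro: injI)
  then have "infinite (range (\<lambda>n. (phi ^^ n) \<alpha>))" by (rule range_inj_infinite)
  moreover have "range (\<lambda>n. (phi ^^ n) \<alpha>) \<subseteq> G" using funpow_G a by auto
  ultimately show ?thesis using finite_subset by blast
qed

lemma sub_fin: "\<beta> \<in> G \<Longrightarrow> finite {n. (phi ^^ n) \<beta> = \<gamma>}"
proof (cases "\<exists>n0. (phi ^^ n0) \<beta> = \<gamma>")
  case True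
  assume b: "\<beta> \<in> G"
  then obtain n0 where n0: "(phi ^^ n0) \<beta> = \<gamma>" using True by blast
  have "{n. (phi ^^ n) \<beta> = \<gamma>} \<subseteq> {n0}" using L0[OF b] n0 by auto
  then show ?thesis using finite_subset by blast
qed simp

lemma L1: "finite A \<Longrightarrow> A \<subseteq> G \<Longrightarrow> finite B \<Longrightarrow> finite {n. \<exists>\<beta>\<in>A. (phi ^^ n) \<beta> \<in> B}"
proof -
  assume a: "finite A" "A \<subseteq> G" "finite B"
  have "{n. \<exists>\<beta>\<in>A. (phi ^^ n) \<beta> \<in> B} = (\<Union>\<beta>\<in>A. \<Union>\<gamma>\<in>B. {n. (phi ^^ n) \<beta> = \<gamma>})" by auto
  then show ?thesis using a sub_fin by auto
qed

lemma Dconst_le: "\<beta> \<in> G \<Longrightarrow> \<alpha> \<in> G \<Longrightarrow> (phi ^^ n) \<beta> = (phi ^^ m) \<alpha> \<Longrightarrow> (phi ^^ n') \<beta> = (phi ^^ m') \<alpha>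
   \<Longrightarrow> n \<le> n' \<Longrightarrow> m' = n' - n + m"
proof -
  assume a: "\<beta> \<in> G" "\<alpha> \<in> G" "(phi ^^ n) \<beta> = (phi ^^ m) \<alpha>" "(phi ^^ n') \<beta> = (phi ^^ m') \<alpha>" "n \<le> n'"
  have "(phi ^^ n') \<beta> = (phi ^^ (n' - n)) ((phi ^^ n) \<beta>)"
    using a(5) by (metis funpow_add le_add_diff_inverse2 comp_apply)
  also have "\<dots> = (phi ^^ (n' - n + m)) \<alpha>" using a(3) by (simp add: funpow_add)
  finally show ?thesis using a L0 by metis
qed

lemma L2: "finite F \<Longrightarrow> F \<subseteq> G \<Longrightarrow> \<alpha> \<in> G \<Longrightarrow>
   \<exists>C. \<forall>\<beta>\<in>F. \<forall>n m. (phi ^^ n) \<beta> = (phi ^^ m) \<alpha> \<longrightarrow> n \<le> m + C \<and> m \<le> n + C"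
proof (induction F rule: finite_induct)
  case empty then show ?case by simp
next
  case (insert \<beta> F)
  then obtain C where C: "\<forall>\<beta>\<in>F. \<forall>n m. (phi ^^ n) \<beta> = (phi ^^ m) \<alpha> \<longrightarrow> n \<le> m + C \<and> m \<le> n + C" by auto
  have b: "\<beta> \<in> G" using insert by auto
  have "\<exists>C'. \<forall>n m. (phi ^^ n) \<beta> = (phi ^^ m) \<alpha> \<longrightarrow> n \<le> m + C' \<and> m \<le> n + C'"
  proof (cases "\<exists>n0 m0. (phi ^^ n0) \<beta> = (phi ^^ m0) \<alpha>")
    case True
    then obtain n0 m0 where nm: "(phi ^^ n0) \<beta> = (phi ^^ m0) \<alpha>" by blast
    show ?thesis
    proof (intro exI allI impI)
      fix n m assume h: "(phi ^^ n) \<beta> = (phi ^^ m) \<alpha>"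
      show "n \<le> m + (n0 + m0) \<and> m \<le> n + (n0 + m0)"
      proof (cases "n0 \<le> n")
        case True
        then have "m = n - n0 + m0" using Dconst_le[OF b insert(5) nm h] by simp
        then show ?thesis using True by simp
      next
        case False
        then have "m0 = n0 - n + m" using Dconst_le[OF b insert(5) h nm] by simp
        then show ?thesis using False by simp
      qed
    qed
  qed auto
  then obtain C' where C': "\<forall>n m. (phi ^^ n) \<beta> = (phi ^^ m) \<alpha> \<longrightarrow> n \<le> m + C' \<and> m \<le> n + C'" by blast
  show ?case
  proof (intro exI[of _ "C + C'"] ballI allI impI)
    fix \<gamma> n m assume g: "\<gamma> \<in> insert \<beta> F" and h: "(phi ^^ n) \<gamma> = (phi ^^ m) \<alpha>"
    show "n \<le> m + (C + C') \<and> m \<le> n + (C + C')"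
    proof (cases "\<gamma> = \<beta>")
      case True then show ?thesis using C' h by force
    next
      case False then have "\<gamma> \<in> F" using g by auto
      then show ?thesis using C h by force
    qed
  qed
qed

end


context L5 begin

sublocale M: Metric_space "PiE G (\<lambda>_. X)" d by (rule ms)

abbreviation "PT \<equiv> product_topology (\<lambda>_. discrete_topology X) G"
abbreviation "SP \<equiv> PiE G (\<lambda>_. X)"

lemma cpt: "compact_space PT"
  by (simp add: compact_space_product_topology compact_space_discrete_topology finX)

definition cyl where "cyl x F = {y \<in> SP. \<forall>i\<in>F. y i = x i}"

lemma cyl_open:
  assumes x: "x \<in> SP" and F: "finite F" "F \<subseteq> G"
  shows "openin PT (cyl x F)"
proof -
  have e: "cyl x F = PiE G (\<lambda>i. if i \<in> F then {x i} else X)"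
    using x F by (auto simp: cyl_def PiE_iff extensional_def split: if_splits; metis subsetD)
  have "{i \<in> G. (if i \<in> F then {x i} else X) \<noteq> topspace (discrete_topology X)} \<subseteq> F" by auto
  then have "finite {i \<in> G. (if i \<in> F then {x i} else X) \<noteq> topspace (discrete_topology X)}"
    using F finite_subset by blast
  moreover have "\<forall>i\<in>G. openin (discrete_topology X) (if i \<in> F then {x i} else X)"
    using x by (auto simp: PiE_iff)
  ultimately show ?thesis unfolding e by (simp add: openin_PiE_gen)
qed

lemma ball_cyl:
  assumes x: "x \<in> SP" and t: "t > 0"
  shows "\<exists>F. finite F \<and> F \<subseteq> G \<and> cyl x F \<subseteq> M.mball x t"
proof -
  have "openin PT (M.mball x t)" using M.openin_mball top by metis
  moreover have "x \<in> M.mball x t" using x t by simp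
  ultimately obtain U where U: "finite {i \<in> G. U i \<noteq> topspace (discrete_topology X)}"
    "\<forall>i\<in>G. openin (discrete_topology X) (U i)" "x \<in> PiE G U" "PiE G U \<subseteq> M.mball x t"
    unfolding openin_product_topology_alt by meson
  define F where "F = {i \<in> G. U i \<noteq> X}"
  have "cyl x F \<subseteq> PiE G U"
  proof
    fix y assume y: "y \<in> cyl x F"
    show "y \<in> PiE G U"
    proof (subst PiE_iff, intro conjI ballI)
      fix i assume i: "i \<in> G"
      show "y i \<in> U i"
      proof (cases "i \<in> F")
        case True then have "y i = x i" using y by (simp add: cyl_def)
        then show ?thesis using x U(3) i by (auto simp: PiE_iff)
      next
        case False then have "U i = X" using i F_def by auto
        then show ?thesis using y i by (auto simp: cyl_def PiE_iff)
      qed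
    next
      show "y \<in> extensional G" using y by (auto simp: cyl_def PiE_iff)
    qed
  qed
  then show ?thesis using U F_def by (intro exI[of _ F]) auto
qed

lemma agreeA:
  assumes t: "t > 0"
  shows "\<exists>F. finite F \<and> F \<subseteq> G \<and> (\<forall>x\<in>SP. \<forall>y\<in>SP. (\<forall>i\<in>F. x i = y i) \<longrightarrow> d x y < t)"
proof -
  have "\<forall>x\<in>SP. \<exists>F. finite F \<and> F \<subseteq> G \<and> cyl x F \<subseteq> M.mball x (t/2)"
    using ball_cyl t by (simp add: field_simps)
  then obtain Fx where Fx: "\<And>x. x \<in> SP \<Longrightarrow> finite (Fx x) \<and> Fx x \<subseteq> G \<and> cyl x (Fx x) \<subseteq> M.mball x (t/2)"
    by (metis (no_types, lifting) bchoice)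
  have "compactin PT (topspace PT)" using cpt compact_space_def by blast
  moreover have "\<forall>U\<in>(\<lambda>x. cyl x (Fx x)) ` SP. openin PT U"
  proof
    fix U assume "U \<in> (\<lambda>x. cyl x (Fx x)) ` SP"
    then obtain x where "x \<in> SP" "U = cyl x (Fx x)" by blast
    then show "openin PT U" using Fx cyl_open by simp
  qed
  moreover have "topspace PT \<subseteq> \<Union> ((\<lambda>x. cyl x (Fx x)) ` SP)"
  proof
    fix x assume "x \<in> topspace PT"
    then have x: "x \<in> SP" by (simp add: topspace_product_topology)
    then have "x \<in> cyl x (Fx x)" by (simp add: cyl_def)
    then show "x \<in> \<Union> ((\<lambda>x. cyl x (Fx x)) ` SP)" using x by blast
  qed
  ultimately obtain \<F> where \<F>: "finite \<F>" "\<F> \<subseteq> (\<lambda>x. cyl x (Fx x)) ` SP" "topspace PT \<subseteq> \<Union> \<F>"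
    unfolding compactin_def by meson
  then obtain S where S: "S \<subseteq> SP" "finite S" "\<F> = (\<lambda>x. cyl x (Fx x)) ` S"
    using finite_subset_image[OF \<F>(1,2)] by blast
  define F where "F = \<Union> (Fx ` S)"
  have "finite F" using S Fx F_def by auto
  moreover have "F \<subseteq> G" using S Fx F_def by blast
  moreover have "\<forall>x\<in>SP. \<forall>y\<in>SP. (\<forall>i\<in>F. x i = y i) \<longrightarrow> d x y < t"
  proof (intro ballI impI)
    fix x y assume x: "x \<in> SP" and y: "y \<in> SP" and ag: "\<forall>i\<in>F. x i = y i"
    have "x \<in> \<Union> \<F>" using \<F>(3) x by (auto simp: topspace_product_topology)
    then obtain w where w: "w \<in> S" "x \<in> cyl w (Fx w)" using S(3) by auto
    have "y \<in> cyl w (Fx w)" using w ag y F_def by (auto simp: cyl_def)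
    moreover have "w \<in> SP" using w S(1) by blast
    ultimately have "y \<in> M.mball w (t/2)" "x \<in> M.mball w (t/2)" using w Fx by blast+
    then have "d w y < t/2" "d w x < t/2" by simp_all
    moreover have "d x y \<le> d x w + d w y" using M.triangle x y w S(1) by blast
    moreover have "d x w = d w x" by (rule M.commute)
    ultimately show "d x y < t" by linarith
  qed
  ultimately show ?thesis by blast
qed

lemma sepB:
  assumes a: "\<alpha> \<in> G"
  shows "\<exists>r>0. \<forall>x\<in>SP. \<forall>y\<in>SP. x \<alpha> \<noteq> y \<alpha> \<longrightarrow> r \<le> d x y"
proof -
  have "\<forall>x\<in>SP. \<exists>e>0. M.mball x e \<subseteq> cyl x {\<alpha>}"
  proof
    fix x assume x: "x \<in> SP"
    have "openin M.mtopology (cyl x {\<alpha>})" using cyl_open[OF x] a top by simp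
    moreover have "x \<in> cyl x {\<alpha>}" using x by (simp add: cyl_def)
    ultimately show "\<exists>e>0. M.mball x e \<subseteq> cyl x {\<alpha>}" using M.openin_mtopology by blast
  qed
  then obtain ex where ex: "\<And>x. x \<in> SP \<Longrightarrow> ex x > 0 \<and> M.mball x (ex x) \<subseteq> cyl x {\<alpha>}"
    by (metis (no_types, lifting) bchoice)
  have "compactin PT (topspace PT)" using cpt compact_space_def by blast
  moreover have "\<forall>U\<in>(\<lambda>x. M.mball x (ex x / 2)) ` SP. openin PT U"
    using top M.openin_mball by auto
  moreover have "topspace PT \<subseteq> \<Union> ((\<lambda>x. M.mball x (ex x / 2)) ` SP)"
  proof
    fix x assume "x \<in> topspace PT"
    then have x: "x \<in> SP" by (simp add: topspace_product_topology)
    then have "x \<in> M.mball x (ex x / 2)" using ex by simp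
    then show "x \<in> \<Union> ((\<lambda>x. M.mball x (ex x / 2)) ` SP)" using x by blast
  qed
  ultimately obtain \<F> where \<F>: "finite \<F>" "\<F> \<subseteq> (\<lambda>x. M.mball x (ex x / 2)) ` SP" "topspace PT \<subseteq> \<Union> \<F>"
    unfolding compactin_def by meson
  then obtain S where S: "S \<subseteq> SP" "finite S" "\<F> = (\<lambda>x. M.mball x (ex x / 2)) ` S"
    using finite_subset_image[OF \<F>(1,2)] by blast
  define r where "r = Min (insert 1 ((\<lambda>x. ex x / 2) ` S))"
  have rpos: "r > 0" unfolding r_def using S ex by (subst Min_gr_iff) auto
  have rle: "\<And>w. w \<in> S \<Longrightarrow> r \<le> ex w / 2" unfolding r_def using S by (intro Min_le) auto
  have "\<forall>x\<in>SP. \<forall>y\<in>SP. x \<alpha> \<noteq> y \<alpha> \<longrightarrow> r \<le> d x y"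
  proof (intro ballI impI)
    fix x y assume x: "x \<in> SP" and y: "y \<in> SP" and ne: "x \<alpha> \<noteq> y \<alpha>"
    show "r \<le> d x y"
    proof (rule ccontr)
      assume "\<not> r \<le> d x y"
      then have dxy: "d x y < r" by simp
      have "x \<in> \<Union> \<F>" using \<F>(3) x by (auto simp: topspace_product_topology)
      then obtain w where w: "w \<in> S" "x \<in> M.mball w (ex w / 2)" using S(3) by auto
      have wS: "w \<in> SP" using w S by auto
      have "d w x < ex w / 2" using w by simp
      moreover have "d w y \<le> d w x + d x y" using M.triangle x y wS by blast
      moreover have "r \<le> ex w / 2" using rle w by simp
      ultimately have "d w y < ex w" using dxy by linarith
      then have "y \<in> M.mball w (ex w)" "x \<in> M.mball w (ex w)" using wS y x \<open>d w x < ex w / 2\<close> ex[OF wS] by auto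
      then have "y \<in> cyl w {\<alpha>}" "x \<in> cyl w {\<alpha>}" using ex[OF wS] by auto
      then show False using ne by (simp add: cyl_def)
    qed
  qed
  then show ?thesis using rpos by blast
qed

end


context L5 begin

definition g where "g = from_nat_into G"

lemma g_bij: "bij_betw g UNIV G"
  unfolding g_def using bij_betw_from_nat_into[OF cntG G_infinite] .

lemma g_inj: "inj g" using g_bij by (simp add: bij_betw_def)
lemma g_G: "g i \<in> G" using g_bij by (auto simp: bij_betw_def)
lemma g_surj: "\<beta> \<in> G \<Longrightarrow> \<exists>i. g i = \<beta>"
proof -
  assume "\<beta> \<in> G"
  then have "\<beta> \<in> range g" using g_bij by (simp add: bij_betw_def)
  then show ?thesis by (metis rangeE)
qed

definition \<alpha>0 where "\<alpha>0 = g 0"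
lemma a0G: "\<alpha>0 \<in> G" by (simp add: \<alpha>0_def g_G)

definition NN :: "nat \<Rightarrow> nat" where "NN k = fact (Suc k)"
definition oddr where "oddr m \<longleftrightarrow> (\<exists>k. NN (2*k+1) \<le> m \<and> m < NN (2*k+2))"
definition blk where "blk m = (LEAST k. NN (2*k+1) \<le> m \<and> m < NN (2*k+2))"

lemma NN_Suc: "NN (Suc k) = (k+2) * NN k" by (simp add: NN_def)
lemma NN_pos: "NN k \<ge> 1" by (simp add: NN_def Suc_leI)
lemma NN_ge: "NN k \<ge> k + 1" unfolding NN_def using fact_ge_self[of "Suc k"] by simp
lemma NN_smono: "strict_mono NN"
proof (rule strict_mono_Suc_iff[THEN iffD2], intro allI)
  fix k have "NN k < (k+2) * NN k" using NN_pos[of k] by simp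
  then show "NN k < NN (Suc k)" by (simp add: NN_Suc)
qed

lemma even_block: "NN (2*k) \<le> m \<Longrightarrow> m < NN (2*k+1) \<Longrightarrow> \<not> oddr m"
proof
  assume a: "NN (2*k) \<le> m" "m < NN (2*k+1)" "oddr m"
  then obtain k' where k': "NN (2*k'+1) \<le> m" "m < NN (2*k'+2)" unfolding oddr_def by blast
  have "NN (2*k'+1) < NN (2*k+1)" using k' a by linarith
  then have "2*k'+1 < 2*k+1" using NN_smono strict_mono_less by blast
  then have "2*k'+2 \<le> 2*k" by simp
  then have "NN (2*k'+2) \<le> NN (2*k)" using NN_smono strict_mono_less_eq by blast
  then show False using a k' by linarith
qed

lemma blk_eq: "NN (2*k+1) \<le> m \<Longrightarrow> m < NN (2*k+2) \<Longrightarrow> blk m = k"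
  unfolding blk_def
proof (rule Least_equality)
  assume a: "NN (2*k+1) \<le> m" "m < NN (2*k+2)"
  then show "NN (2*k+1) \<le> m \<and> m < NN (2*k+2)" by simp
  fix k' assume k': "NN (2*k'+1) \<le> m \<and> m < NN (2*k'+2)"
  show "k \<le> k'"
  proof (rule ccontr)
    assume "\<not> k \<le> k'"
    then have "2*k'+2 \<le> 2*k+1" by simp
    then have "NN (2*k'+2) \<le> NN (2*k+1)" using NN_smono strict_mono_less_eq by blast
    then show False using a k' by linarith
  qed
qed

definition ca where "ca = (SOME a. a \<in> X)"
definition cb where "cb = (SOME b. b \<in> X \<and> b \<noteq> ca)"

lemma ca_X: "ca \<in> X"
proof -
  have "X \<noteq> {}" using cardX by auto
  then show ?thesis unfolding ca_def by (meson ex_in_conv someI_ex)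
qed

lemma cb_X: "cb \<in> X \<and> cb \<noteq> ca"
proof -
  have "card (X - {ca}) = card X - 1" using ca_X finX by (simp add: card_Diff_singleton)
  then have "card (X - {ca}) \<noteq> 0" using cardX by linarith
  then have "X - {ca} \<noteq> {}" by (metis card.empty)
  then have "\<exists>b. b \<in> X \<and> b \<noteq> ca" by blast
  then show ?thesis unfolding cb_def by (rule someI_ex)
qed

definition Lst where "Lst j = from_nat_into (lists X) j"
definition Pj where "Pj j = g ` {..<length (Lst j)}"

lemma Lst_lists: "Lst j \<in> lists X"
proof -
  have "lists X \<noteq> {}" by blast
  then show ?thesis unfolding Lst_def by (rule from_nat_into)
qed

lemma Pj_fin: "finite (Pj j)" by (simp add: Pj_def)
lemma Pj_G: "Pj j \<subseteq> G" using g_G by (auto simp: Pj_def)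

definition CC where "CC j = (SOME C. \<forall>\<beta>\<in>Pj j. \<forall>n m. (phi ^^ n) \<beta> = (phi ^^ m) \<alpha>0 \<longrightarrow> n \<le> m + C \<and> m \<le> n + C)"

lemma CC_prop: "\<beta> \<in> Pj j \<Longrightarrow> (phi ^^ n) \<beta> = (phi ^^ m) \<alpha>0 \<Longrightarrow> n \<le> m + CC j \<and> m \<le> n + CC j"
proof -
  assume a: "\<beta> \<in> Pj j" "(phi ^^ n) \<beta> = (phi ^^ m) \<alpha>0"
  have "\<exists>C. \<forall>\<beta>\<in>Pj j. \<forall>n m. (phi ^^ n) \<beta> = (phi ^^ m) \<alpha>0 \<longrightarrow> n \<le> m + C \<and> m \<le> n + C"
    using L2[OF Pj_fin Pj_G a0G] .
  then have "\<forall>\<beta>\<in>Pj j. \<forall>n m. (phi ^^ n) \<beta> = (phi ^^ m) \<alpha>0 \<longrightarrow> n \<le> m + CC j \<and> m \<le> n + CC j"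
    unfolding CC_def by (rule someI_ex)
  then show ?thesis using a by blast
qed

definition good where "good j U n \<longleftrightarrow> (\<forall>\<beta>\<in>Pj j. (phi ^^ n) \<beta> \<notin> U) \<and> (\<forall>m. n \<le> m + CC j \<and> m \<le> n + CC j \<longrightarrow> \<not> oddr m)"

lemma deep_even: "\<exists>k\<ge>B. \<forall>m. NN (2*k) \<le> m \<and> m \<le> NN (2*k) + 2*C \<longrightarrow> \<not> oddr m"
proof (intro exI conjI allI impI)
  let ?k = "B + C"
  show "B \<le> ?k" by simp
  fix m assume m: "NN (2*?k) \<le> m \<and> m \<le> NN (2*?k) + 2*C"
  have e: "NN (2*?k+1) = NN (2*?k) + (2*?k+1) * NN (2*?k)"
    using NN_Suc[of "2*?k"] by (simp add: algebra_simps)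
  have "(2*?k+1) * NN (2*?k) \<ge> (2*?k+1) * 1" using NN_pos by (intro mult_le_mono2) auto
  then have i1: "NN (2*?k) + (2*?k+1) \<le> NN (2*?k) + (2*?k+1) * NN (2*?k)" by simp
  have "m < NN (2*?k) + (2*?k+1)" using m by simp
  also note i1
  finally have "m < NN (2*?k+1)" using e by simp
  then show "\<not> oddr m" using even_block m by blast
qed

lemma exists_good: "finite U \<Longrightarrow> \<exists>n. good j U n"
proof -
  assume U: "finite U"
  obtain B where B: "{n. \<exists>\<beta>\<in>Pj j. (phi ^^ n) \<beta> \<in> U} \<subseteq> {..<B}"
    using finite_nat_bounded[OF L1[OF Pj_fin Pj_G U]] by blast
  obtain k where k: "k \<ge> B" "\<forall>m. NN (2*k) \<le> m \<and> m \<le> NN (2*k) + 2*CC j \<longrightarrow> \<not> oddr m"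
    using deep_even by blast
  let ?n = "NN (2*k) + CC j"
  have "?n \<ge> B" using NN_ge[of "2*k"] k(1) by linarith
  then have "\<forall>\<beta>\<in>Pj j. (phi ^^ ?n) \<beta> \<notin> U" using B by (auto simp: subset_iff)
  moreover have "\<forall>m. ?n \<le> m + CC j \<and> m \<le> ?n + CC j \<longrightarrow> \<not> oddr m" using k(2) by auto
  ultimately show ?thesis unfolding good_def by blast
qed

primrec Ub where
  "Ub 0 = {}"
| "Ub (Suc j) = Ub j \<union> (\<lambda>\<beta>. (phi ^^ (LEAST n. good j (Ub j) n)) \<beta>) ` Pj j"

definition ns where "ns j = (LEAST n. good j (Ub j) n)"

lemma Ub_Suc': "Ub (Suc j) = Ub j \<union> (phi ^^ ns j) ` Pj j" by (simp add: ns_def)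

lemma Ub_fin: "finite (Ub j)"
  by (induction j) (auto simp: Pj_fin)

lemma ns_good: "good j (Ub j) (ns j)"
  unfolding ns_def using exists_good[OF Ub_fin] by (rule LeastI_ex)

lemma Ub_mono: "j \<le> j' \<Longrightarrow> Ub j \<subseteq> Ub j'"
  by (rule lift_Suc_mono_le[of Ub]) (auto simp: Ub_Suc')

lemma realize_disj:
  assumes "j' < j" "i < length (Lst j)" "i' < length (Lst j')"
  shows "(phi ^^ ns j) (g i) \<noteq> (phi ^^ ns j') (g i')"
proof -
  have "(phi ^^ ns j') (g i') \<in> Ub (Suc j')" unfolding Ub_Suc' using assms(3) by (auto simp: Pj_def)
  also have "\<dots> \<subseteq> Ub j" using assms(1) by (intro Ub_mono) simp
  finally have "(phi ^^ ns j') (g i') \<in> Ub j" .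
  moreover have "g i \<in> Pj j" using assms(2) by (simp add: Pj_def)
  ultimately show ?thesis using ns_good[of j] unfolding good_def by metis
qed

definition z where
  "z \<gamma> = (if \<exists>j i. i < length (Lst j) \<and> \<gamma> = (phi ^^ ns j) (g i)
          then (SOME v. \<exists>j i. i < length (Lst j) \<and> \<gamma> = (phi ^^ ns j) (g i) \<and> v = Lst j ! i) else ca)"

lemma z_real:
  assumes "i < length (Lst j)"
  shows "z ((phi ^^ ns j) (g i)) = Lst j ! i"
proof -
  let ?\<gamma> = "(phi ^^ ns j) (g i)"
  have ex: "\<exists>v j' i'. i' < length (Lst j') \<and> ?\<gamma> = (phi ^^ ns j') (g i') \<and> v = Lst j' ! i'"
    using assms by blast
  obtain j' i' where ji: "i' < length (Lst j')" "?\<gamma> = (phi ^^ ns j') (g i')"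
    "(SOME v. \<exists>j i. i < length (Lst j) \<and> ?\<gamma> = (phi ^^ ns j) (g i) \<and> v = Lst j ! i) = Lst j' ! i'"
    using someI_ex[OF ex] by blast
  have "j' = j"
  proof (rule ccontr)
    assume "j' \<noteq> j"
    then have "j' < j \<or> j < j'" by arith
    then show False using realize_disj ji assms by metis
  qed
  then have "g i = g i'" using ji funpow_inj g_G by metis
  then have "i = i'" using g_inj by (simp add: inj_eq)
  then show ?thesis unfolding z_def using ji assms \<open>j' = j\<close> by auto
qed

lemma z_X: "z \<gamma> \<in> X"
proof (cases "\<exists>j i. i < length (Lst j) \<and> \<gamma> = (phi ^^ ns j) (g i)")
  case True
  then obtain j i where ji: "i < length (Lst j)" "\<gamma> = (phi ^^ ns j) (g i)" by blast
  then have "z \<gamma> = Lst j ! i" using z_real by simp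
  moreover have "Lst j ! i \<in> X" using Lst_lists ji(1) by (meson in_listsD nth_mem)
  ultimately show ?thesis by simp
next
  case False then have "z \<gamma> = ca" unfolding z_def by (rule if_not_P)
  then show ?thesis using ca_X by simp
qed

definition vl where "vl s m = (if s (fst (prod_decode (blk m))) then ca else cb)"

definition xs where
  "xs s \<gamma> = (if \<gamma> \<in> G then (if \<exists>m. oddr m \<and> \<gamma> = (phi ^^ m) \<alpha>0 then vl s (THE m. \<gamma> = (phi ^^ m) \<alpha>0) else z \<gamma>) else undefined)"

lemma xs_odd: "oddr m \<Longrightarrow> xs s ((phi ^^ m) \<alpha>0) = vl s m"
proof -
  assume o: "oddr m"
  have "(THE m'. (phi ^^ m) \<alpha>0 = (phi ^^ m') \<alpha>0) = m"
    by (rule the_equality) (use L0 a0G in auto)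
  then show ?thesis using o funpow_G[OF a0G] unfolding xs_def by auto
qed

lemma xs_nonodd: "\<gamma> \<in> G \<Longrightarrow> (\<forall>m. \<gamma> = (phi ^^ m) \<alpha>0 \<longrightarrow> \<not> oddr m) \<Longrightarrow> xs s \<gamma> = z \<gamma>"
  unfolding xs_def by auto

lemma xs_real:
  assumes "i < length (Lst j)"
  shows "xs s ((phi ^^ ns j) (g i)) = Lst j ! i"
proof -
  have gi: "g i \<in> Pj j" using assms by (simp add: Pj_def)
  have "\<forall>m. (phi ^^ ns j) (g i) = (phi ^^ m) \<alpha>0 \<longrightarrow> \<not> oddr m"
  proof (intro allI impI)
    fix m assume "(phi ^^ ns j) (g i) = (phi ^^ m) \<alpha>0"
    then have "ns j \<le> m + CC j \<and> m \<le> ns j + CC j" using CC_prop gi by blast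
    then show "\<not> oddr m" using ns_good[of j] unfolding good_def by blast
  qed
  then have "xs s ((phi ^^ ns j) (g i)) = z ((phi ^^ ns j) (g i))"
    using xs_nonodd funpow_G g_G by blast
  then show ?thesis using z_real assms by simp
qed

lemma vl_X: "vl s m \<in> X" using ca_X cb_X by (simp add: vl_def)

lemma xs_SP: "xs s \<in> SP"
  unfolding PiE_iff extensional_def using vl_X z_X by (auto simp: xs_def)

lemma shift_pow:
  "x \<in> SP \<Longrightarrow> (shift_map G phi ^^ n) x = restrict (\<lambda>\<alpha>. x ((phi ^^ n) \<alpha>)) G"
proof (induction n)
  case 0 then show ?case by (simp add: PiE_restrict)
next
  case (Suc n)
  have "(shift_map G phi ^^ Suc n) x = shift_map G phi (restrict (\<lambda>\<alpha>. x ((phi ^^ n) \<alpha>)) G)"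
    by (simp only: funpow.simps comp_apply Suc.IH[OF Suc.prems])
  also have "\<dots> = restrict (\<lambda>\<alpha>. x ((phi ^^ Suc n) \<alpha>)) G"
    unfolding shift_map_def using phiG by (auto simp: funpow_swap1 image_subset_iff intro!: restrict_ext)
  finally show ?case .
qed

lemma shift_SP: "x \<in> SP \<Longrightarrow> (shift_map G phi ^^ n) x \<in> SP"
  using shift_pow funpow_G by (auto simp: PiE_iff)

end



lemma limsup_ge1:
  fixes u :: "nat \<Rightarrow> ereal"
  assumes h: "\<And>w B. w < 1 \<Longrightarrow> \<exists>n\<ge>B. w \<le> u n"
  shows "1 \<le> limsup u"
proof (rule Limsup_greatest)
  fix P assume "eventually P sequentially"
  then obtain B where B: "\<forall>n\<ge>B. P n" by (auto simp: eventually_sequentially)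
  show "1 \<le> Sup (u ` Collect P)"
  proof (rule dense_le)
    fix w assume "w < (1::ereal)"
    then obtain n where n: "n \<ge> B" "w \<le> u n" using h by blast
    then have "u n \<le> Sup (u ` Collect P)" using B by (intro SUP_upper) auto
    then show "w \<le> Sup (u ` Collect P)" using n(2) by (rule order.trans[rotated])
  qed
qed

lemma liminf_le0:
  fixes u :: "nat \<Rightarrow> ereal"
  assumes h: "\<And>y B. 0 < y \<Longrightarrow> \<exists>n\<ge>B. u n \<le> y"
  shows "liminf u \<le> 0"
proof (rule Liminf_least)
  fix P assume "eventually P sequentially"
  then obtain B where B: "\<forall>n\<ge>B. P n" by (auto simp: eventually_sequentially)
  show "Inf (u ` Collect P) \<le> 0"
  proof (rule dense_ge)
    fix y assume "0 < (y::ereal)"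
    then obtain n where n: "n \<ge> B" "u n \<le> y" using h by blast
    then have "Inf (u ` Collect P) \<le> u n" using B by (intro INF_lower) auto
    then show "Inf (u ` Collect P) \<le> y" using n(2) by (rule order.trans)
  qed
qed

lemma ereal_arch1: "w < (1::ereal) \<Longrightarrow> \<exists>K. \<forall>k\<ge>K. w \<le> ereal (real k / (real k + 1))"
proof (cases w)
  case (real e)
  assume "w < 1"
  then have e: "e < 1" using real by simp
  obtain n :: nat where n: "e / (1 - e) < real n" using reals_Archimedean2 by blast
  show ?thesis
  proof (intro exI allI impI)
    fix k :: nat assume "n \<le> k"
    then have "real n \<le> real k" by simp
    then have "e / (1 - e) < real k" using n by linarith
    then have "e < real k * (1 - e)" using e by (simp add: pos_divide_less_eq)
    then have "e * (real k + 1) \<le> real k" by (simp add: algebra_simps)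
    then have "e \<le> real k / (real k + 1)" by (simp add: pos_le_divide_eq)
    then show "w \<le> ereal (real k / (real k + 1))" using real by simp
  qed
qed auto

lemma ereal_arch0: "0 < (y::ereal) \<Longrightarrow> \<exists>K. \<forall>k\<ge>K. ereal (1 / (real k + 1)) \<le> y"
proof (cases y)
  case (real e)
  assume "0 < y"
  then have e: "0 < e" using real by simp
  obtain n :: nat where n: "1 / e < real n" using reals_Archimedean2 by blast
  show ?thesis
  proof (intro exI allI impI)
    fix k :: nat assume "n \<le> k"
    then have "real n \<le> real k" by simp
    then have "1 / e < real k + 1" using n by linarith
    then have "1 < (real k + 1) * e" using e by (simp add: pos_divide_less_eq)
    then have "1 / (real k + 1) \<le> e" by (simp add: pos_divide_le_eq mult.commute)
    then show "ereal (1 / (real k + 1)) \<le> y" using real by simp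
  qed
qed auto

context L5 begin

abbreviation "ff \<equiv> shift_map G phi"

lemma xi_le: "xi d ff x y t n \<le> n"
proof -
  have "xi d ff x y t n \<le> card {..<n}" unfolding xi_def by (intro card_mono) auto
  then show ?thesis by simp
qed

lemma ratio_le1: "real (xi d ff x y t n) / real n \<le> 1"
  using xi_le[of x y t n] by (cases "n = 0") (auto simp: divide_le_eq)

lemma ratio_ge0: "0 \<le> real (xi d ff x y t n) / real n" by simp

lemma trans_xs: "transitive_point PT ff (xs s)"
  unfolding transitive_point_def
proof (rule antisym[OF closure_of_subset_topspace], rule subsetI)
  fix w assume wT: "w \<in> topspace PT"
  then have w: "w \<in> SP" by (simp add: topspace_product_topology)
  show "w \<in> PT closure_of {(ff ^^ n) (xs s) | n. True}"
    unfolding in_closure_of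
  proof (intro conjI allI impI wT)
    fix T assume T: "w \<in> T \<and> openin PT T"
    then obtain U where U: "finite {i \<in> G. U i \<noteq> topspace (discrete_topology X)}"
      "\<forall>i\<in>G. openin (discrete_topology X) (U i)" "w \<in> PiE G U" "PiE G U \<subseteq> T"
      unfolding openin_product_topology_alt by meson
    define F where "F = {i \<in> G. U i \<noteq> X}"
    have Ff: "finite F" using U(1) F_def by simp
    obtain b where b: "g -` F \<subseteq> {..<b}" using finite_nat_bounded[OF finite_vimageI[OF Ff g_inj]] by blast
    define L where "L = map (\<lambda>i. w (g i)) [0..<b]"
    have LX: "L \<in> lists X" using w g_G by (auto simp: L_def PiE_iff)
    have cX: "countable (lists X)" using finX by (simp add: countable_finite)
    have "\<exists>j. from_nat_into (lists X) j = L" by (rule from_nat_into_surj[OF cX LX])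
    then obtain j where j: "Lst j = L" unfolding Lst_def by blast
    define y where "y = (ff ^^ ns j) (xs s)"
    have yO: "y \<in> {(ff ^^ n) (xs s) | n. True}" unfolding y_def by blast
    have ySP: "y \<in> SP" unfolding y_def by (rule shift_SP[OF xs_SP])
    have "y \<in> PiE G U"
    proof (subst PiE_iff, intro conjI ballI)
      fix i assume i: "i \<in> G"
      show "y i \<in> U i"
      proof (cases "i \<in> F")
        case True
        obtain i' where i': "g i' = i" using g_surj i by blast
        then have "i' < b" using b True by auto
        then have l: "i' < length (Lst j)" and nth: "Lst j ! i' = w (g i')" using j by (auto simp: L_def)
        have "y i = xs s ((phi ^^ ns j) i)" using i unfolding y_def shift_pow[OF xs_SP] by simp
        also have "\<dots> = w i" using xs_real[OF l, of s] nth i' by simp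
        finally show ?thesis using U(3) i by (auto simp: PiE_iff)
      next
        case False then have "U i = X" using i F_def by auto
        then show ?thesis using ySP i by (auto simp: PiE_iff)
      qed
    next
      show "y \<in> extensional G" using ySP by (auto simp: PiE_iff)
    qed
    then have "y \<in> T" using U(4) by blast
    then show "\<exists>y. y \<in> {(ff ^^ n) (xs s) | n. True} \<and> y \<in> T" using yO by blast
  qed
qed

lemma upper1:
  assumes t0: "t0 > 0"
  shows "F_upper d ff (xs s) (xs t) t0 = 1"
proof -
  obtain F where F: "finite F" "F \<subseteq> G" "\<forall>x\<in>SP. \<forall>y\<in>SP. (\<forall>i\<in>F. x i = y i) \<longrightarrow> d x y < t0"
    using agreeA[OF t0] by blast
  obtain CF where CF: "\<forall>\<beta>\<in>F. \<forall>n m. (phi ^^ n) \<beta> = (phi ^^ m) \<alpha>0 \<longrightarrow> n \<le> m + CF \<and> m \<le> n + CF"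
    using L2[OF F(1,2) a0G] by blast
  have close: "d ((ff ^^ n) (xs s)) ((ff ^^ n) (xs t)) < t0"
    if n: "\<forall>m. n \<le> m + CF \<and> m \<le> n + CF \<longrightarrow> \<not> oddr m" for n
  proof -
    have "\<forall>i\<in>F. (ff ^^ n) (xs s) i = (ff ^^ n) (xs t) i"
    proof
      fix \<beta> assume b: "\<beta> \<in> F"
      then have bG: "\<beta> \<in> G" using F by blast
      have nod: "\<forall>m. (phi ^^ n) \<beta> = (phi ^^ m) \<alpha>0 \<longrightarrow> \<not> oddr m"
      proof (intro allI impI)
        fix m assume "(phi ^^ n) \<beta> = (phi ^^ m) \<alpha>0"
        then have "n \<le> m + CF \<and> m \<le> n + CF" using CF b by blast
        then show "\<not> oddr m" using n by blast
      qed
      have "xs s ((phi ^^ n) \<beta>) = xs t ((phi ^^ n) \<beta>)"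
        using xs_nonodd[OF funpow_G[OF bG] nod] by simp
      then show "(ff ^^ n) (xs s) \<beta> = (ff ^^ n) (xs t) \<beta>"
        using bG by (simp add: shift_pow[OF xs_SP])
    qed
    moreover have "(ff ^^ n) (xs s) \<in> SP" "(ff ^^ n) (xs t) \<in> SP" using shift_SP[OF xs_SP] by auto
    ultimately show ?thesis using F(3) by blast
  qed
  have key: "ereal (real k / (real k + 1)) \<le> ereal (real (xi d ff (xs s) (xs t) t0 (NN (2*k+1))) / real (NN (2*k+1)))"
    if k: "k \<ge> CF" for k
  proof -
    define N where "N = NN (2*k)"
    have N1: "NN (2*k+1) = (2*k+2) * N" using NN_Suc[of "2*k"] N_def by simp
    have Nge: "N \<ge> 2*k+1" using NN_ge[of "2*k"] N_def by simp
    define I where "I = {N + CF ..< NN (2*k+1) - CF}"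
    have "I \<subseteq> {i \<in> {..<NN (2*k+1)}. d ((ff ^^ i) (xs s)) ((ff ^^ i) (xs t)) < t0}"
    proof
      fix n assume "n \<in> I"
      then have nI: "N + CF \<le> n" "n < NN (2*k+1) - CF" by (auto simp: I_def)
      have "\<forall>m. n \<le> m + CF \<and> m \<le> n + CF \<longrightarrow> \<not> oddr m"
      proof (intro allI impI)
        fix m assume "n \<le> m + CF \<and> m \<le> n + CF"
        then have "NN (2*k) \<le> m" "m < NN (2*k+1)" using nI N_def by auto
        then show "\<not> oddr m" by (rule even_block)
      qed
      then have "d ((ff ^^ n) (xs s)) ((ff ^^ n) (xs t)) < t0" by (rule close)
      moreover have "n < NN (2*k+1)" using nI by simp
      ultimately show "n \<in> {i \<in> {..<NN (2*k+1)}. d ((ff ^^ i) (xs s)) ((ff ^^ i) (xs t)) < t0}"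
        by simp
    qed
    then have "card I \<le> xi d ff (xs s) (xs t) t0 (NN (2*k+1))"
      unfolding xi_def by (intro card_mono) auto
    moreover have "card I = NN (2*k+1) - CF - (N + CF)" by (simp add: I_def)
    moreover have "NN (2*k+1) = 2*(k*N) + 2*N" unfolding N1 by (simp add: algebra_simps)
    ultimately have xi_ge: "2*(k*N) \<le> xi d ff (xs s) (xs t) t0 (NN (2*k+1))" using Nge k by linarith
    have Npos: "real N > 0" using Nge by simp
    have "real k / (real k + 1) = real (2*(k*N)) / real ((2*k+2) * N)"
    proof -
      have "real k + 1 \<noteq> 0" by simp
      moreover have "(2*k+2) * N \<noteq> 0" using Npos by simp
      then have "real ((2*k+2) * N) \<noteq> 0" by (metis of_nat_eq_0_iff)
      ultimately have "(real k / (real k + 1) = real (2*(k*N)) / real ((2*k+2) * N))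
          = (real k * real ((2*k+2) * N) = real (2*(k*N)) * (real k + 1))" by (rule frac_eq_eq)
      moreover have "real k * real ((2*k+2) * N) = real (2*(k*N)) * (real k + 1)"
        by (simp add: algebra_simps)
      ultimately show ?thesis by simp
    qed
    also have "\<dots> \<le> real (xi d ff (xs s) (xs t) t0 (NN (2*k+1))) / real ((2*k+2) * N)"
      by (rule divide_right_mono[OF of_nat_mono[OF xi_ge]]) simp
    finally show ?thesis using N1 by simp
  qed
  let ?u = "\<lambda>n. ereal (real (xi d ff (xs s) (xs t) t0 n) / real n)"
  have "1 \<le> limsup ?u"
  proof (rule limsup_ge1)
    fix w :: ereal and B :: nat assume "w < 1"
    then obtain K where K: "\<forall>k\<ge>K. w \<le> ereal (real k / (real k + 1))" using ereal_arch1 by blast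
    define k where "k = max K (max B CF)"
    have "NN (2*k+1) \<ge> B" using NN_ge[of "2*k+1"] k_def by simp
    moreover have "w \<le> ereal (real k / (real k + 1))" using K k_def by simp
    moreover have "ereal (real k / (real k + 1)) \<le> ?u (NN (2*k+1))" using key[of k] k_def by simp
    ultimately show "\<exists>n\<ge>B. w \<le> ?u n" using order.trans by blast
  qed
  moreover have "limsup ?u \<le> 1"
    by (rule Limsup_bounded) (simp add: ratio_le1)
  ultimately show ?thesis unfolding F_upper_def by simp
qed

end


context L5 begin

lemma vl_diff:
  assumes "s i \<noteq> t i" "NN (2*k+1) \<le> m" "m < NN (2*k+2)" "k = prod_encode (i, j)"
  shows "vl s m \<noteq> vl t m"
proof -
  have "blk m = k" using blk_eq assms(2,3) by blast
  then have "fst (prod_decode (blk m)) = i" using assms(4) by simp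
  then show ?thesis using assms(1) cb_X unfolding vl_def by auto
qed

lemma oddrI: "NN (2*k+1) \<le> m \<Longrightarrow> m < NN (2*k+2) \<Longrightarrow> oddr m"
  unfolding oddr_def by blast

lemma lower0:
  assumes st: "s \<noteq> t" and r: "r > 0" and sep: "\<forall>x\<in>SP. \<forall>y\<in>SP. x \<alpha>0 \<noteq> y \<alpha>0 \<longrightarrow> r \<le> d x y"
  shows "F_lower d ff (xs s) (xs t) r = 0"
proof -
  have "\<exists>i. s i \<noteq> t i" using st by (simp add: fun_eq_iff)
  then obtain i where i: "s i \<noteq> t i" by blast
  have bound: "xi d ff (xs s) (xs t) r (NN (2*k+2)) \<le> NN (2*k+1)" if k: "k = prod_encode (i, j)" for k j
  proof -
    have "{n \<in> {..<NN (2*k+2)}. d ((ff ^^ n) (xs s)) ((ff ^^ n) (xs t)) < r} \<subseteq> {..<NN (2*k+1)}"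
    proof
      fix n assume n: "n \<in> {n \<in> {..<NN (2*k+2)}. d ((ff ^^ n) (xs s)) ((ff ^^ n) (xs t)) < r}"
      show "n \<in> {..<NN (2*k+1)}"
      proof (rule ccontr)
        assume "n \<notin> {..<NN (2*k+1)}"
        then have n1: "NN (2*k+1) \<le> n" by simp
        have n2: "n < NN (2*k+2)" using n by simp
        have o: "oddr n" using oddrI[OF n1 n2] .
        have "(ff ^^ n) (xs s) \<alpha>0 = vl s n" using a0G xs_odd[OF o] by (simp add: shift_pow[OF xs_SP])
        moreover have "(ff ^^ n) (xs t) \<alpha>0 = vl t n" using a0G xs_odd[OF o] by (simp add: shift_pow[OF xs_SP])
        moreover have "vl s n \<noteq> vl t n" using vl_diff[of s i t, OF i n1 n2 k] .
        ultimately have "r \<le> d ((ff ^^ n) (xs s)) ((ff ^^ n) (xs t))"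
          using sep shift_SP[OF xs_SP] by metis
        then show False using n by simp
      qed
    qed
    then have "xi d ff (xs s) (xs t) r (NN (2*k+2)) \<le> card {..<NN (2*k+1)}"
      unfolding xi_def by (intro card_mono) auto
    then show ?thesis by simp
  qed
  have rat: "real (xi d ff (xs s) (xs t) r (NN (2*k+2))) / real (NN (2*k+2)) \<le> 1 / (real k + 1)"
    if k: "k = prod_encode (i, j)" for k j
  proof -
    define N where "N = NN (2*k+1)"
    have N2: "NN (2*k+2) = (2*k+3) * N" using NN_Suc[of "2*k+1"] N_def by (simp add: algebra_simps)
    have Npos: "real N > 0" using NN_pos[of "2*k+1"] N_def by simp
    have "real (xi d ff (xs s) (xs t) r (NN (2*k+2))) / real (NN (2*k+2)) \<le> real N / real (NN (2*k+2))"
      using bound[OF k] N_def by (intro divide_right_mono) auto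
    also have "\<dots> = real N / (real N * (2 * real k + 3))" unfolding N2 by (simp add: algebra_simps)
    also have "\<dots> = 1 / (2 * real k + 3)" using Npos by simp
    also have "\<dots> \<le> 1 / (real k + 1)" by (intro divide_left_mono) auto
    finally show ?thesis .
  qed
  let ?u = "\<lambda>n. ereal (real (xi d ff (xs s) (xs t) r n) / real n)"
  have "liminf ?u \<le> 0"
  proof (rule liminf_le0)
    fix y :: ereal and B :: nat assume "0 < y"
    then obtain K where K: "\<forall>k\<ge>K. ereal (1 / (real k + 1)) \<le> y" using ereal_arch0 by blast
    define k where "k = prod_encode (i, max K B)"
    have kge: "k \<ge> max K B" unfolding k_def by (rule le_prod_encode_2)
    have "NN (2*k+2) \<ge> B" using NN_ge[of "2*k+2"] kge by simp
    moreover have "?u (NN (2*k+2)) \<le> ereal (1 / (real k + 1))" using rat[OF k_def] by simp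
    moreover have "ereal (1 / (real k + 1)) \<le> y" using K kge by simp
    ultimately show "\<exists>n\<ge>B. ?u n \<le> y" using order.trans by blast
  qed
  moreover have "0 \<le> liminf ?u"
    by (rule Liminf_bounded) (simp add: ratio_ge0)
  ultimately show ?thesis unfolding F_lower_def by simp
qed

lemma xs_inj: "inj xs"
proof (rule injI, rule ccontr)
  fix s t assume eq: "xs s = xs t" and st: "s \<noteq> t"
  have "\<exists>i. s i \<noteq> t i" using st by (simp add: fun_eq_iff)
  then obtain i where i: "s i \<noteq> t i" by blast
  define k where "k = prod_encode (i, 0)"
  have n1: "NN (2*k+1) \<le> NN (2*k+1)" and n2: "NN (2*k+1) < NN (2*k+2)"
    using NN_smono strict_mono_less by auto
  have o: "oddr (NN (2*k+1))" by (rule oddrI[OF n1 n2])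
  have "xs s ((phi ^^ NN (2*k+1)) \<alpha>0) \<noteq> xs t ((phi ^^ NN (2*k+1)) \<alpha>0)"
    using xs_odd[OF o] vl_diff[of s i t, OF i n1 n2 k_def] by simp
  then show False using eq by simp
qed

lemma main:
  "\<exists>M. M \<subseteq> SP \<and> uncountable M \<and> (\<forall>x\<in>M. transitive_point PT ff x)
     \<and> (\<exists>r>0. \<forall>x\<in>M. \<forall>y\<in>M. x \<noteq> y \<longrightarrow> (\<forall>t>0. F_upper d ff x y t = 1) \<and> F_lower d ff x y r = 0)"
proof (rule exI[of _ "range xs"], intro conjI)
  show "range xs \<subseteq> SP" using xs_SP by auto
  show "uncountable (range xs)"
  proof
    assume "countable (range xs)"
    then have "countable (UNIV :: (nat \<Rightarrow> bool) set)"
      using countable_image_inj_on xs_inj by blast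
    then show False using uncountable_nat_bool by blast
  qed
  show "\<forall>x\<in>range xs. transitive_point PT ff x" using trans_xs by auto
  obtain r where r: "r > 0" "\<forall>x\<in>SP. \<forall>y\<in>SP. x \<alpha>0 \<noteq> y \<alpha>0 \<longrightarrow> r \<le> d x y"
    using sepB[OF a0G] by blast
  show "\<exists>r>0. \<forall>x\<in>range xs. \<forall>y\<in>range xs. x \<noteq> y \<longrightarrow>
        (\<forall>t>0. F_upper d ff x y t = 1) \<and> F_lower d ff x y r = 0"
  proof (rule exI[of _ r], intro conjI ballI impI)
    show "r > 0" by (rule r(1))
    fix x y assume x: "x \<in> range xs" and y: "y \<in> range xs" and xy: "x \<noteq> y"
    obtain s t where xs: "x = xs s" "y = xs t" using x y by blast
    have st: "s \<noteq> t" using xy xs by auto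
    show "F_lower d ff x y r = 0" using lower0[OF st r(1) r(2)] xs by simp
    show "\<forall>t>0. F_upper d ff x y t = 1" using upper1 xs by simp
  qed
qed

end

theorem lemma5p2:
  fixes X :: "'x set" and G :: "'g set" and phi :: "'g \<Rightarrow> 'g"
    and d :: "('g \<Rightarrow> 'x) \<Rightarrow> ('g \<Rightarrow> 'x) \<Rightarrow> real"
  assumes "finite X" and "card X \<ge> 2"
    and "countable G" and "G \<noteq> {}"
    and "phi ` G \<subseteq> G" and "inj_on phi G"
    and "\<forall>\<alpha>\<in>G. \<forall>n::nat. n \<ge> 1 \<longrightarrow> (phi ^^ n) \<alpha> \<noteq> \<alpha>"
    and "Metric_space (PiE G (\<lambda>_. X)) d"
    and "Metric_space.mtopology (PiE G (\<lambda>_. X)) d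
           = product_topology (\<lambda>_. discrete_topology X) G"
  shows "\<exists>M. M \<subseteq> PiE G (\<lambda>_. X) \<and> uncountable M
           \<and> (\<forall>x\<in>M. transitive_point (product_topology (\<lambda>_. discrete_topology X) G)
                                      (shift_map G phi) x)
           \<and> (\<exists>r>0. \<forall>x\<in>M. \<forall>y\<in>M. x \<noteq> y \<longrightarrow>
                 (\<forall>t>0. F_upper d (shift_map G phi) x y t = 1)
                 \<and> F_lower d (shift_map G phi) x y r = 0)"
proof -
  have "L5 X G phi d" unfolding L5_def using assms by blast
  then interpret L5 X G phi d .
  show ?thesis using main by simp
qed

end
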